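(* Let $A\in\mathbb{T}^{m\times n}$, $B\in\mathbb{T}^{m\times q}$, $P\in\mathbb{R}^{q\times n}$ row-stochastic, with every row of $B$, every column of $A$ and every row of $A$ containing at least one finite entry. Let $F=A^\sharp\circ B\circ P$ and $F^\ast=(B^\top)^\sharp\circ P\circ A^\top$. Then: (i) $\operatorname{cond}_{\mathbb{R}}(F)=\operatorname{cond}(F^\ast)$, i.e. the condition number of $\mathscr{P}_{\mathbb{R}}(F)$ equals the condition number of $\mathscr{P}(F^\ast)$; (ii) at least one of the problems $\mathscr{P}(F^\ast)$ and $\mathscr{P}_{\mathbb{R}}(F)$ is feasible; (iii) at most one of the problems $\mathscr{P}_{\mathbb{R}}(F)$ and $\mathscr{P}_{\mathbb{R}}(F^\ast)$ is feasible.
   Context: $\mathbb{T}=\mathbb{R}\cup\{-\infty\}$; $\mathbb{0}$ is the vector with all entries $-\infty$. For $C\in\mathbb{T}^{r\times s}$, $z\in\mathbb{T}^s$: $(C\odot z)_i=\max_k(C_{ik}+z_k)$; the adjoint is $C^\sharp(y)_j=\min_i(-C_{ij}+y_i)$ for $y\in(\mathbb{R}\cup\{\pm\infty\})^r$, with $(+\infty)+(-\infty)=+\infty$. $Pz$ is the usual product with $0\cdot(-\infty)=0$. So $F(x)=A^\sharp(B\odot(Px))$ is a self-map of $\mathbb{T}^n$ and $F^\ast(y)=(B^\top)^\sharp(P(A^\top\odot y))$ is a self-map of $\mathbb{T}^m$. Order is entrywise; $y\ll z$ means $y_i<z_i$ for all $i$; $\|u\|_\infty=\max_i|u_i|$;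 for $u\in\mathbb{R}^d$, $u+G$ is the map $x\mapsto u+G(x)$. For a self-map $G$ of $\mathbb{T}^d$: $\mathscr{P}(G)$ is the problem "does there exist $x\in\mathbb{T}^d$, $x\ne\mathbb{0}$, $x\le G(x)$?"; $\mathscr{P}_{\mathbb{R}}(G)$ is "does there exist $x\in\mathbb{R}^d$ with $x\ll G(x)$?". Feasible means such $x$ exists. Condition numbers: if $\mathscr{P}(G)$ is feasible, $\operatorname{cond}(G)=(\inf\{\|u\|_\infty: u\in\mathbb{R}^d,\ \mathscr{P}(u+G)\text{ infeasible}\})^{-1}$; otherwise $\operatorname{cond}(G)=(\inf\{\|u\|_\infty: u\in\mathbb{R}^d,\ \mathscr{P}(u+G)\text{ feasible}\})^{-1}$, with $\inf\emptyset=+\infty$, $0^{-1}=+\infty$, $(+\infty)^{-1}=0$. $\operatorname{cond}_{\mathbb{R}}(G)$ is defined identically with $\mathscr{P}_{\mathbb{R}}$ in place of $\mathscr{P}$. *)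

theory Defs
  imports "HOL-Analysis.Analysis"
begin

text \<open>Tropical semiring T = R with -infinity, embedded in ereal (the value +infinity
  only appears as an output of the adjoint). Vectors indexed by a finite type.
  ereal conventions: (+inf) + (-inf) = +inf, 0 * (-inf) = 0, inverse 0 = inf, inverse inf = 0.\<close>

definition tvec :: "('d \<Rightarrow> ereal) \<Rightarrow> bool" where
  "tvec x \<longleftrightarrow> (\<forall>i. x i \<noteq> \<infinity>)"

definition tzero :: "'d \<Rightarrow> ereal" where
  "tzero = (\<lambda>_. -\<infinity>)"

definition mp_mult :: "('r \<Rightarrow> 's::finite \<Rightarrow> ereal) \<Rightarrow> ('s \<Rightarrow> ereal) \<Rightarrow> ('r \<Rightarrow> ereal)" where
  "mp_mult C z = (\<lambda>i. Max (range (\<lambda>k. C i k + z k)))"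

definition mp_adj :: "('r::finite \<Rightarrow> 's \<Rightarrow> ereal) \<Rightarrow> ('r \<Rightarrow> ereal) \<Rightarrow> ('s \<Rightarrow> ereal)" where
  "mp_adj C y = (\<lambda>j. Min (range (\<lambda>i. - C i j + y i)))"

definition mtransp :: "('r \<Rightarrow> 's \<Rightarrow> 'a) \<Rightarrow> ('s \<Rightarrow> 'r \<Rightarrow> 'a)" where
  "mtransp C = (\<lambda>i j. C j i)"

text \<open>Usual product P z with 0 * (-inf) = 0\<close>
definition lin_mult :: "('q \<Rightarrow> 'n::finite \<Rightarrow> real) \<Rightarrow> ('n \<Rightarrow> ereal) \<Rightarrow> ('q \<Rightarrow> ereal)" where
  "lin_mult P x = (\<lambda>k. \<Sum>j\<in>UNIV. ereal (P k j) * x j)"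

definition row_stochastic :: "('q \<Rightarrow> 'n::finite \<Rightarrow> real) \<Rightarrow> bool" where
  "row_stochastic P \<longleftrightarrow> (\<forall>k j. 0 \<le> P k j) \<and> (\<forall>k. (\<Sum>j\<in>UNIV. P k j) = 1)"

definition opF :: "('m::finite \<Rightarrow> 'n \<Rightarrow> ereal) \<Rightarrow> ('m \<Rightarrow> 'q::finite \<Rightarrow> ereal)
    \<Rightarrow> ('q \<Rightarrow> 'n::finite \<Rightarrow> real) \<Rightarrow> ('n \<Rightarrow> ereal) \<Rightarrow> ('n \<Rightarrow> ereal)" where
  "opF A B P x = mp_adj A (mp_mult B (lin_mult P x))"

definition opFstar :: "('m::finite \<Rightarrow> 'n \<Rightarrow> ereal) \<Rightarrow> ('m \<Rightarrow> 'q::finite \<Rightarrow> ereal)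
    \<Rightarrow> ('q \<Rightarrow> 'n::finite \<Rightarrow> real) \<Rightarrow> ('m \<Rightarrow> ereal) \<Rightarrow> ('m \<Rightarrow> ereal)" where
  "opFstar A B P y = mp_adj (mtransp B) (lin_mult P (mp_mult (mtransp A) y))"

definition feasP :: "(('d \<Rightarrow> ereal) \<Rightarrow> ('d \<Rightarrow> ereal)) \<Rightarrow> bool" where
  "feasP G \<longleftrightarrow> (\<exists>x. tvec x \<and> x \<noteq> tzero \<and> (\<forall>i. x i \<le> G x i))"

definition feasPR :: "(('d \<Rightarrow> ereal) \<Rightarrow> ('d \<Rightarrow> ereal)) \<Rightarrow> bool" where
  "feasPR G \<longleftrightarrow> (\<exists>x::'d \<Rightarrow> real. \<forall>i. ereal (x i) < G (\<lambda>j. ereal (x j)) i)"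

definition shiftmap :: "('d \<Rightarrow> real) \<Rightarrow> (('d \<Rightarrow> ereal) \<Rightarrow> ('d \<Rightarrow> ereal)) \<Rightarrow> (('d \<Rightarrow> ereal) \<Rightarrow> ('d \<Rightarrow> ereal))" where
  "shiftmap u G = (\<lambda>x i. ereal (u i) + G x i)"

definition supnorm :: "('d::finite \<Rightarrow> real) \<Rightarrow> real" where
  "supnorm u = Max (range (\<lambda>i. \<bar>u i\<bar>))"

text \<open>Condition number w.r.t. a feasibility predicate; Inf {} = inf in ereal,
  inverse 0 = inf, inverse inf = 0.\<close>
definition cond_gen :: "((('d::finite \<Rightarrow> ereal) \<Rightarrow> ('d \<Rightarrow> ereal)) \<Rightarrow> bool)
    \<Rightarrow> (('d \<Rightarrow> ereal) \<Rightarrow> ('d \<Rightarrow> ereal)) \<Rightarrow> ereal" where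
  "cond_gen feas G =
     (if feas G
      then inverse (Inf {ereal (supnorm u) | u. \<not> feas (shiftmap u G)})
      else inverse (Inf {ereal (supnorm u) | u. feas (shiftmap u G)}))"

definition condP :: "(('d::finite \<Rightarrow> ereal) \<Rightarrow> ('d \<Rightarrow> ereal)) \<Rightarrow> ereal" where
  "condP G = cond_gen feasP G"

definition condPR :: "(('d::finite \<Rightarrow> ereal) \<Rightarrow> ('d \<Rightarrow> ereal)) \<Rightarrow> ereal" where
  "condPR G = cond_gen feasPR G"

end

theory Submission
  imports Defs
begin


lemma Max_range_ge: "f i \<le> Max (range (f::'a::finite \<Rightarrow> 'b::linorder))"
  by (rule Max_ge) auto
lemma Max_range_in: "Max (range (f::'a::finite \<Rightarrow> 'b::linorder)) \<in> range f"
  by (rule Max_in) auto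
lemma Min_range_le: "Min (range (f::'a::finite \<Rightarrow> 'b::linorder)) \<le> f i"
  by (rule Min_le) auto
lemma Min_range_in: "Min (range (f::'a::finite \<Rightarrow> 'b::linorder)) \<in> range f"
  by (rule Min_in) auto
lemma Max_range_less_iff: "Max (range (f::'a::finite \<Rightarrow> 'b::linorder)) < c \<longleftrightarrow> (\<forall>i. f i < c)"
  by (subst Max_less_iff) auto
lemma Max_range_le_iff: "Max (range (f::'a::finite \<Rightarrow> 'b::linorder)) \<le> c \<longleftrightarrow> (\<forall>i. f i \<le> c)"
  by (subst Max_le_iff) auto
lemma le_Min_range_iff: "c \<le> Min (range (f::'a::finite \<Rightarrow> 'b::linorder)) \<longleftrightarrow> (\<forall>i. c \<le> f i)"
  by (subst Min_ge_iff) auto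
lemma less_Min_range_iff: "c < Min (range (f::'a::finite \<Rightarrow> 'b::linorder)) \<longleftrightarrow> (\<forall>i. c < f i)"
  by (subst Min_gr_iff) auto
lemma Min_range_le_iff: "Min (range (f::'a::finite \<Rightarrow> 'b::linorder)) \<le> c \<longleftrightarrow> (\<exists>i. f i \<le> c)"
  by (subst Min_le_iff) auto
lemma le_Max_range_iff: "c \<le> Max (range (f::'a::finite \<Rightarrow> 'b::linorder)) \<longleftrightarrow> (\<exists>i. c \<le> f i)"
  by (subst Max_ge_iff) auto

locale tset =
  fixes A :: "'m::finite \<Rightarrow> 'n::finite \<Rightarrow> ereal"
    and B :: "'m \<Rightarrow> 'q::finite \<Rightarrow> ereal"
    and P :: "'q \<Rightarrow> 'n \<Rightarrow> real"
  assumes A_T: "\<forall>i j. A i j \<noteq> \<infinity>"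
    and B_T: "\<forall>i k. B i k \<noteq> \<infinity>"
    and P_stoch: "row_stochastic P"
    and B_rows: "\<forall>i. \<exists>k. B i k \<noteq> -\<infinity>"
    and A_cols: "\<forall>j. \<exists>i. A i j \<noteq> -\<infinity>"
    and A_rows: "\<forall>i. \<exists>j. A i j \<noteq> -\<infinity>"
begin

lemma Pnn: "0 \<le> P k j" using P_stoch by (auto simp: row_stochastic_def)
lemma Psum: "(\<Sum>j\<in>UNIV. P k j) = 1" using P_stoch by (auto simp: row_stochastic_def)

lemma linR: "lin_mult P (\<lambda>j. ereal (x j)) = (\<lambda>k. ereal (\<Sum>j\<in>UNIV. P k j * x j))"
  by (simp add: lin_mult_def sum_ereal)

lemma Psum_le: "(\<Sum>j\<in>UNIV. P k j * x j) \<le> Max (range x)"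
proof -
  have "(\<Sum>j\<in>UNIV. P k j * x j) \<le> (\<Sum>j\<in>UNIV. P k j * Max (range x))"
    by (rule sum_mono) (simp add: Pnn Max_range_ge mult_left_mono)
  also have "\<dots> = Max (range x)" by (simp add: sum_distrib_right[symmetric] Psum)
  finally show ?thesis .
qed

lemma Psum_ge: "Min (range x) \<le> (\<Sum>j\<in>UNIV. P k j * x j)"
proof -
  have "(\<Sum>j\<in>UNIV. P k j * Min (range x)) \<le> (\<Sum>j\<in>UNIV. P k j * x j)"
    by (rule sum_mono) (simp add: Pnn Min_range_le mult_left_mono)
  moreover have "(\<Sum>j\<in>UNIV. P k j * Min (range x)) = Min (range x)" by (simp add: sum_distrib_right[symmetric] Psum)
  ultimately show ?thesis by simp
qed

lemma mp_mult_real: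
  assumes "\<forall>k. C i k \<noteq> \<infinity>" "C i kz \<noteq> -\<infinity>"
  shows "\<bar>mp_mult C (\<lambda>k. ereal (v k)) i\<bar> \<noteq> \<infinity>"
proof -
  have "mp_mult C (\<lambda>k. ereal (v k)) i \<in> range (\<lambda>k. C i k + ereal (v k))"
    unfolding mp_mult_def by (rule Max_range_in)
  then obtain k where k: "mp_mult C (\<lambda>k. ereal (v k)) i = C i k + ereal (v k)" by blast
  have "C i kz + ereal (v kz) \<le> mp_mult C (\<lambda>k. ereal (v k)) i"
    unfolding mp_mult_def by (rule Max_range_ge)
  moreover have "C i kz + ereal (v kz) \<noteq> -\<infinity>" using assms by (cases "C i kz") auto
  moreover have "C i k + ereal (v k) \<noteq> \<infinity>" using assms by (cases "C i k") auto
  ultimately show ?thesis using k by auto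
qed

lemma mp_adj_real:
  assumes "\<forall>i. C i j \<noteq> \<infinity>" "C iz j \<noteq> -\<infinity>"
  shows "\<bar>mp_adj C (\<lambda>i. ereal (w i)) j\<bar> \<noteq> \<infinity>"
proof -
  have "mp_adj C (\<lambda>i. ereal (w i)) j \<in> range (\<lambda>i. - C i j + ereal (w i))"
    unfolding mp_adj_def by (rule Min_range_in)
  then obtain i where i: "mp_adj C (\<lambda>i. ereal (w i)) j = - C i j + ereal (w i)" by blast
  have "mp_adj C (\<lambda>i. ereal (w i)) j \<le> - C iz j + ereal (w iz)"
    unfolding mp_adj_def by (rule Min_range_le)
  moreover have "- C iz j + ereal (w iz) \<noteq> \<infinity>" using assms by (cases "C iz j") auto
  moreover have "- C i j + ereal (w i) \<noteq> -\<infinity>" using assms by (cases "C i j") auto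
  ultimately show ?thesis using i by auto
qed

definition zA :: "('m \<Rightarrow> real) \<Rightarrow> 'n \<Rightarrow> real" where
  "zA y l = real_of_ereal (mp_mult (mtransp A) (\<lambda>i. ereal (y i)) l)"

lemma zA: "mp_mult (mtransp A) (\<lambda>i. ereal (y i)) = (\<lambda>l. ereal (zA y l))"
proof
  fix l
  obtain iz where "A iz l \<noteq> -\<infinity>" using A_cols by auto
  then have "\<bar>mp_mult (mtransp A) (\<lambda>i. ereal (y i)) l\<bar> \<noteq> \<infinity>"
    by (intro mp_mult_real[where kz=iz]) (auto simp: mtransp_def A_T)
  then show "mp_mult (mtransp A) (\<lambda>i. ereal (y i)) l = ereal (zA y l)"
    by (simp add: zA_def ereal_real')
qed

definition wB :: "('n \<Rightarrow> real) \<Rightarrow> 'm \<Rightarrow> real" where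
  "wB x i = real_of_ereal (mp_mult B (lin_mult P (\<lambda>j. ereal (x j))) i)"

lemma wB: "mp_mult B (lin_mult P (\<lambda>j. ereal (x j))) = (\<lambda>i. ereal (wB x i))"
proof
  fix i
  obtain kz where "B i kz \<noteq> -\<infinity>" using B_rows by auto
  then have "\<bar>mp_mult B (\<lambda>k. ereal (\<Sum>j\<in>UNIV. P k j * x j)) i\<bar> \<noteq> \<infinity>"
    by (intro mp_mult_real[where kz=kz]) (auto simp: B_T)
  then show "mp_mult B (lin_mult P (\<lambda>j. ereal (x j))) i = ereal (wB x i)"
    by (simp add: wB_def ereal_real' linR)
qed

definition fR :: "('n \<Rightarrow> real) \<Rightarrow> 'n \<Rightarrow> real" where
  "fR x j = real_of_ereal (opF A B P (\<lambda>j. ereal (x j)) j)"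

lemma fR: "opF A B P (\<lambda>j. ereal (x j)) = (\<lambda>j. ereal (fR x j))"
proof
  fix j
  obtain iz where "A iz j \<noteq> -\<infinity>" using A_cols by auto
  then have "\<bar>mp_adj A (\<lambda>i. ereal (wB x i)) j\<bar> \<noteq> \<infinity>"
    by (intro mp_adj_real[where iz=iz]) (auto simp: A_T)
  then show "opF A B P (\<lambda>j. ereal (x j)) j = ereal (fR x j)"
    by (simp add: fR_def ereal_real' opF_def wB)
qed

definition fsR :: "('m \<Rightarrow> real) \<Rightarrow> 'm \<Rightarrow> real" where
  "fsR y i = real_of_ereal (opFstar A B P (\<lambda>i. ereal (y i)) i)"

lemma fsR: "opFstar A B P (\<lambda>i. ereal (y i)) = (\<lambda>i. ereal (fsR y i))"
proof
  fix i
  obtain kz where "B i kz \<noteq> -\<infinity>" using B_rows by auto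
  then have "\<bar>mp_adj (mtransp B) (\<lambda>k. ereal (\<Sum>j\<in>UNIV. P k j * zA y j)) i\<bar> \<noteq> \<infinity>"
    by (intro mp_adj_real[where iz=kz]) (auto simp: B_T mtransp_def)
  then show "opFstar A B P (\<lambda>i. ereal (y i)) i = ereal (fsR y i)"
    by (simp add: fsR_def ereal_real' opFstar_def zA linR)
qed

end

context tset begin

lemma lin_le_Max:
  assumes z: "\<forall>l. z l \<noteq> \<infinity>"
  shows "lin_mult P z k + ereal (\<Sum>j\<in>UNIV. P k j * x j) \<le> Max (range (\<lambda>l. z l + ereal (x l)))"
proof -
  let ?M = "Max (range (\<lambda>l. z l + ereal (x l)))"
  have zl: "z l + ereal (x l) \<le> ?M" for l by (rule Max_range_ge)
  show ?thesis
  proof (cases ?M)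
    case (real m)
    have "z l \<le> ereal (m - x l)" for l using zl[of l] real by (cases "z l") auto
    then have "lin_mult P z k \<le> (\<Sum>l\<in>UNIV. ereal (P k l) * ereal (m - x l))"
      unfolding lin_mult_def by (intro sum_mono ereal_mult_left_mono) (auto simp: Pnn)
    also have "\<dots> = ereal (m - (\<Sum>l\<in>UNIV. P k l * x l))"
      by (simp add: sum_ereal right_diff_distrib sum_subtractf sum_distrib_right[symmetric] Psum)
    finally show ?thesis using real by (cases "lin_mult P z k") auto
  next
    case PInf
    have "?M \<in> range (\<lambda>l. z l + ereal (x l))" by (rule Max_range_in)
    then obtain l where "?M = z l + ereal (x l)" by blast
    then show ?thesis using PInf z by (cases "z l") auto
  next
    case MInf
    then have zm: "z l = -\<infinity>" for l using zl[of l] by (cases "z l") auto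
    obtain l where l: "P k l > 0"
    proof (rule ccontr)
      assume "\<not> thesis"
      then have "\<forall>l. P k l \<le> 0" using that by (meson not_le)
      then have "(\<Sum>j\<in>UNIV. P k j) \<le> 0" by (simp add: sum_nonpos)
      then show False using Psum[of k] by simp
    qed
    have "lin_mult P z k = ereal (P k l) * z l + (\<Sum>j\<in>UNIV - {l}. ereal (P k j) * z j)"
      unfolding lin_mult_def by (simp add: sum.remove)
    moreover have "(\<Sum>j\<in>UNIV - {l}. ereal (P k j) * z j) \<noteq> \<infinity>"
      using zm Pnn by (auto simp: sum_Pinfty less_le)
    ultimately have "lin_mult P z k = -\<infinity>" using l zm by simp
    then show ?thesis by simp
  qed
qed

lemma weak:
  assumes x: "\<forall>j. ereal (lam + x j) < opF A B P (\<lambda>j. ereal (x j)) j"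
    and y: "tvec y" "y \<noteq> tzero" and mu: "\<forall>i. ereal mu + y i \<le> opFstar A B P y i"
  shows "lam + mu < 0"
proof -
  have yT: "y i \<noteq> \<infinity>" for i using y by (auto simp: tvec_def)
  have xA: "a + lam + x j < wB x i" if "A i j = ereal a" for i j a
  proof -
    have "ereal (lam + x j) < mp_adj A (\<lambda>i. ereal (wB x i)) j" using x by (simp add: opF_def wB)
    then have "ereal (lam + x j) < - A i j + ereal (wB x i)" unfolding mp_adj_def less_Min_range_iff by blast
    then show ?thesis using that by simp
  qed
  define z where "z = mp_mult (mtransp A) y"
  define pz where "pz = lin_mult P z"
  have yB: "ereal mu + y i + B i k \<le> pz k" for i k
  proof -
    have "ereal mu + y i \<le> - B i k + pz k" using mu[rule_format, of i]
      unfolding opFstar_def mp_adj_def pz_def z_def le_Min_range_iff mtransp_def by blast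
    then show ?thesis using B_T yT[of i] by (cases "B i k"; cases "y i"; cases "pz k"; simp)
  qed
  define S where "S = {i. y i \<noteq> -\<infinity>}"
  have "S \<noteq> {}" using y(2) by (auto simp: S_def tzero_def)
  define yr where "yr i = real_of_ereal (y i)" for i
  have yr: "i \<in> S \<Longrightarrow> y i = ereal (yr i)" for i using yT[of i] by (cases "y i") (auto simp: S_def yr_def)
  define D where "D = Max ((\<lambda>i. yr i + wB x i) ` S)"
  have "D \<in> (\<lambda>i. yr i + wB x i) ` S" unfolding D_def using \<open>S \<noteq> {}\<close> by (intro Max_in) auto
  then obtain i0 where i0: "i0 \<in> S" "D = yr i0 + wB x i0" by blast
  have Dge: "yr i + wB x i \<le> D" if "i \<in> S" for i unfolding D_def using that by (intro Max_ge) auto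
  define pxr where "pxr k = (\<Sum>j\<in>UNIV. P k j * x j)" for k
  have "ereal (wB x i0) = Max (range (\<lambda>k. B i0 k + ereal (pxr k)))"
    using fun_cong[OF wB[of x], of i0] unfolding linR mp_mult_def pxr_def by simp
  also have "\<dots> \<in> range (\<lambda>k. B i0 k + ereal (pxr k))" by (rule Max_range_in)
  finally obtain k0 where k0: "ereal (wB x i0) = B i0 k0 + ereal (pxr k0)" by blast
  then have bk0: "B i0 k0 = ereal (wB x i0 - pxr k0)" by (cases "B i0 k0") auto
  have "ereal mu + y i0 + B i0 k0 \<le> pz k0" by (rule yB)
  then have pz1: "ereal (mu + D - pxr k0) \<le> pz k0" using yr[OF i0(1)] bk0 i0(2) by (simp add: algebra_simps)
  have zb: "z l + ereal (x l) < ereal (D - lam)" for l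
  proof -
    have "A i l + y i < ereal (D - lam - x l)" for i
    proof (cases "A i l = -\<infinity> \<or> y i = -\<infinity>")
      case True then show ?thesis using A_T yT[of i] by (cases "y i"; cases "A i l") auto
    next
      case False
      then obtain a where a: "A i l = ereal a" using A_T by (cases "A i l") auto
      have iS: "i \<in> S" using False by (auto simp: S_def)
      have "a + lam + x l < wB x i" by (rule xA[OF a])
      then show ?thesis using Dge[OF iS] yr[OF iS] a by simp
    qed
    then have "z l < ereal (D - lam - x l)" unfolding z_def mp_mult_def mtransp_def Max_range_less_iff by blast
    then show ?thesis by (cases "z l") auto
  qed
  have zT: "\<forall>l. z l \<noteq> \<infinity>"
  proof
    fix l show "z l \<noteq> \<infinity>" using zb[of l] by (cases "z l") auto
  qed
  have "pz k0 + ereal (pxr k0) \<le> Max (range (\<lambda>l. z l + ereal (x l)))"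
    unfolding pz_def pxr_def by (rule lin_le_Max[OF zT])
  also have "\<dots> < ereal (D - lam)" unfolding Max_range_less_iff using zb by blast
  finally have "pz k0 + ereal (pxr k0) < ereal (D - lam)" .
  moreover have "ereal (mu + D - pxr k0) + ereal (pxr k0) \<le> pz k0 + ereal (pxr k0)"
    using pz1 by (intro add_right_mono)
  ultimately have "ereal (mu + D - pxr k0) + ereal (pxr k0) < ereal (D - lam)" by (rule le_less_trans[rotated])
  then have "ereal (mu + D) < ereal (D - lam)" by simp
  then show ?thesis by simp
qed

lemma transform:
  assumes "\<forall>i. opFstar A B P (\<lambda>i. ereal (y i)) i \<le> ereal (M + y i)"
  shows "\<forall>j. ereal ((- zA y j) - M) \<le> opF A B P (\<lambda>j. ereal (- zA y j)) j"
proof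
  fix j
  define pzr where "pzr k = (\<Sum>l\<in>UNIV. P k l * zA y l)" for k
  have px: "lin_mult P (\<lambda>j. ereal (- zA y j)) = (\<lambda>k. ereal (- pzr k))"
    by (simp add: linR pzr_def sum_negf)
  have wlow: "ereal (- M - y i) \<le> mp_mult B (lin_mult P (\<lambda>j. ereal (- zA y j))) i" for i
  proof -
    have "Min (range (\<lambda>k. - B i k + ereal (pzr k))) = opFstar A B P (\<lambda>i. ereal (y i)) i"
      unfolding opFstar_def zA linR pzr_def mp_adj_def by (simp add: mtransp_def)
    also have "\<dots> \<le> ereal (M + y i)" using assms by blast
    finally have "Min (range (\<lambda>k. - B i k + ereal (pzr k))) \<le> ereal (M + y i)" .
    then obtain k where k: "- B i k + ereal (pzr k) \<le> ereal (M + y i)" unfolding Min_range_le_iff by blast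
    then obtain b where b: "B i k = ereal b" using B_T by (cases "B i k") auto
    have "ereal (- M - y i) \<le> B i k + ereal (- pzr k)" using k b by simp
    also have "\<dots> \<le> mp_mult B (lin_mult P (\<lambda>j. ereal (- zA y j))) i"
      unfolding px mp_mult_def by (rule Max_range_ge)
    finally show ?thesis .
  qed
  show "ereal ((- zA y j) - M) \<le> opF A B P (\<lambda>j. ereal (- zA y j)) j"
    unfolding opF_def mp_adj_def le_Min_range_iff
  proof
    fix i
    show "ereal (- zA y j - M) \<le> - A i j + mp_mult B (lin_mult P (\<lambda>j. ereal (- zA y j))) i"
    proof (cases "A i j")
      case (real a)
      have "A i j + ereal (y i) \<le> mp_mult (mtransp A) (\<lambda>i. ereal (y i)) j"
        unfolding mp_mult_def mtransp_def by (rule Max_range_ge)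
      then have "a + y i \<le> zA y j" using real by (simp add: zA)
      then have "ereal (- zA y j - M) \<le> - A i j + ereal (- M - y i)" using real by simp
      also have "\<dots> \<le> - A i j + mp_mult B (lin_mult P (\<lambda>j. ereal (- zA y j))) i"
        by (intro add_left_mono wlow)
      finally show ?thesis .
    qed (use A_T in auto)
  qed
qed

lemma Fbound: "\<exists>K. \<forall>x M. (\<forall>j. ereal (x j - M) \<le> opF A B P (\<lambda>j. ereal (x j)) j) \<longrightarrow> -K \<le> M"
proof -
  obtain ia where ia: "\<forall>j. A (ia j) j \<noteq> -\<infinity>" using A_cols by metis
  define Bm where "Bm i = real_of_ereal (Max (range (B i)))" for i
  have Bm: "B i k \<le> ereal (Bm i)" for i k
  proof -
    obtain kk where kk: "B i kk \<noteq> -\<infinity>" using B_rows by auto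
    have m0: "B i kk \<le> Max (range (B i))" by (rule Max_range_ge)
    have "Max (range (B i)) \<in> range (B i)" by (rule Max_range_in)
    then obtain kx where kx: "Max (range (B i)) = B i kx" by blast
    have m1: "Max (range (B i)) \<noteq> \<infinity>" using B_T kx by simp
    have "\<bar>Max (range (B i))\<bar> \<noteq> \<infinity>" using kk m0 m1 by (cases "Max (range (B i))") auto
    then show ?thesis unfolding Bm_def using Max_range_ge[of "B i" k] by (simp add: ereal_real')
  qed
  define K where "K = Max (range (\<lambda>j. - real_of_ereal (A (ia j) j) + Bm (ia j)))"
  show ?thesis
  proof (intro exI allI impI)
    fix x M
    assume h: "\<forall>j. ereal (x j - M) \<le> opF A B P (\<lambda>j. ereal (x j)) j"
    have "Max (range x) \<in> range x" by (rule Max_range_in)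
    then obtain j where j: "x j = Max (range x)" by (metis rangeE)
    define i where "i = ia j"
    obtain a where a: "A i j = ereal a" using ia A_T unfolding i_def by (cases "A (ia j) j") auto
    have w: "wB x i \<le> Bm i + x j"
    proof -
      have "ereal (wB x i) = Max (range (\<lambda>k. B i k + ereal (\<Sum>l\<in>UNIV. P k l * x l)))"
        using fun_cong[OF wB[of x], of i] unfolding linR mp_mult_def by simp
      also have "\<dots> \<le> ereal (Bm i + x j)" unfolding Max_range_le_iff
      proof
        fix k
        have "B i k + ereal (\<Sum>l\<in>UNIV. P k l * x l) \<le> ereal (Bm i) + ereal (x j)"
          using Bm[of i k] Psum_le[of k x] j by (intro add_mono) auto
        then show "B i k + ereal (\<Sum>l\<in>UNIV. P k l * x l) \<le> ereal (Bm i + x j)" by simp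
      qed
      finally show ?thesis by simp
    qed
    have "ereal (x j - M) \<le> opF A B P (\<lambda>j. ereal (x j)) j" using h by blast
    also have "\<dots> \<le> - A i j + ereal (wB x i)"
      unfolding opF_def wB mp_adj_def by (rule Min_range_le)
    finally have xm: "x j - M \<le> - a + wB x i" using a by simp
    have "- real_of_ereal (A (ia j) j) + Bm (ia j) \<le> K" unfolding K_def by (rule Max_range_ge)
    then have "- a + Bm i \<le> K" using a i_def by simp
    then show "- K \<le> M" using w xm by linarith
  qed
qed

lemma mp_mult_mono: "(\<And>k. z k \<le> z' k) \<Longrightarrow> mp_mult C z i \<le> mp_mult C z' i"
  unfolding mp_mult_def Max_range_le_iff
  by (meson Max_range_ge add_left_mono order_trans)

lemma mp_adj_mono: "(\<And>k. z k \<le> z' k) \<Longrightarrow> mp_adj C z i \<le> mp_adj C z' i"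
  unfolding mp_adj_def le_Min_range_iff
  by (meson Min_range_le add_left_mono order_trans)

lemma lin_mono: "(\<And>k. z k \<le> z' k) \<Longrightarrow> lin_mult P z i \<le> lin_mult P z' i"
  unfolding lin_mult_def by (intro sum_mono ereal_mult_left_mono) (auto simp: Pnn)

lemma Fs_mono: "(\<And>k. y k \<le> y' k) \<Longrightarrow> opFstar A B P y i \<le> opFstar A B P y' i"
  unfolding opFstar_def by (intro mp_adj_mono lin_mono mp_mult_mono)

lemma fsR_mono: "(\<And>k. y k \<le> y' k) \<Longrightarrow> fsR y i \<le> fsR y' i"
  using Fs_mono[of "\<lambda>i. ereal (y i)" "\<lambda>i. ereal (y' i)" i] by (simp add: fsR)

end


lemma tendsto_Max_set:
  fixes f :: "'i \<Rightarrow> 'a \<Rightarrow> 'b::linorder_topology"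
  assumes "finite S" "S \<noteq> {}" "\<And>i. i \<in> S \<Longrightarrow> (f i \<longlongrightarrow> a i) F"
  shows "((\<lambda>x. Max ((\<lambda>i. f i x) ` S)) \<longlongrightarrow> Max (a ` S)) F"
  using assms
proof (induction S rule: finite_ne_induct)
  case (singleton i) then show ?case by simp
next
  case (insert i S)
  have "((\<lambda>x. max (f i x) (Max ((\<lambda>i. f i x) ` S))) \<longlongrightarrow> max (a i) (Max (a ` S))) F"
    using insert by (intro tendsto_max) auto
  then show ?case using insert by (simp add: Max_insert)
qed

lemma tendsto_Min_set:
  fixes f :: "'i \<Rightarrow> 'a \<Rightarrow> 'b::linorder_topology"
  assumes "finite S" "S \<noteq> {}" "\<And>i. i \<in> S \<Longrightarrow> (f i \<longlongrightarrow> a i) F"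
  shows "((\<lambda>x. Min ((\<lambda>i. f i x) ` S)) \<longlongrightarrow> Min (a ` S)) F"
  using assms
proof (induction S rule: finite_ne_induct)
  case (singleton i) then show ?case by simp
next
  case (insert i S)
  have "((\<lambda>x. min (f i x) (Min ((\<lambda>i. f i x) ` S))) \<longlongrightarrow> min (a i) (Min (a ` S))) F"
    using insert by (intro tendsto_min) auto
  then show ?case using insert by (simp add: Min_insert)
qed

lemma tendsto_Max_range:
  fixes f :: "'i::finite \<Rightarrow> 'a \<Rightarrow> 'b::linorder_topology"
  shows "(\<And>i. (f i \<longlongrightarrow> a i) F) \<Longrightarrow> ((\<lambda>x. Max (range (\<lambda>i. f i x))) \<longlongrightarrow> Max (range a)) F"
  by (rule tendsto_Max_set) auto

lemma tendsto_Min_range: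
  fixes f :: "'i::finite \<Rightarrow> 'a \<Rightarrow> 'b::linorder_topology"
  shows "(\<And>i. (f i \<longlongrightarrow> a i) F) \<Longrightarrow> ((\<lambda>x. Min (range (\<lambda>i. f i x))) \<longlongrightarrow> Min (range a)) F"
  by (rule tendsto_Min_set) auto

lemma tendsto_sum_ereal_ninf:
  fixes f :: "'i \<Rightarrow> 'a \<Rightarrow> ereal"
  assumes "finite S" "\<And>i. i \<in> S \<Longrightarrow> (f i \<longlongrightarrow> a i) F" "\<And>i. i \<in> S \<Longrightarrow> a i \<noteq> \<infinity>"
  shows "((\<lambda>x. \<Sum>i\<in>S. f i x) \<longlongrightarrow> (\<Sum>i\<in>S. a i)) F"
  using assms
proof (induction S rule: finite_induct)
  case empty show ?case by simp
next
  case (insert i S)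
  have "(\<Sum>i\<in>S. a i) \<noteq> \<infinity>" using insert by (simp add: sum_Pinfty)
  moreover have "a i \<noteq> \<infinity>" using insert by simp
  ultimately have "((\<lambda>x. f i x + (\<Sum>i\<in>S. f i x)) \<longlongrightarrow> a i + (\<Sum>i\<in>S. a i)) F"
    using insert by (intro tendsto_add_ereal_general) auto
  then show ?case using insert by simp
qed

context tset begin

lemma Fs_expand: "opFstar A B P Y i =
   Min (range (\<lambda>k. - B i k + (\<Sum>l\<in>UNIV. ereal (P k l) * Max (range (\<lambda>i'. A i' l + Y i')))))"
  by (simp add: opFstar_def mp_adj_def lin_mult_def mp_mult_def mtransp_def)

lemma Fs_tendsto:
  assumes Y: "\<And>i. ((\<lambda>t. Y t i) \<longlongrightarrow> Y0 i) F" and Y0: "\<And>i. Y0 i \<noteq> \<infinity>"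
  shows "((\<lambda>t. opFstar A B P (Y t) i) \<longlongrightarrow> opFstar A B P Y0 i) F"
proof -
  define z0 where "z0 l = Max (range (\<lambda>i'. A i' l + Y0 i'))" for l
  have zt: "((\<lambda>t. Max (range (\<lambda>i'. A i' l + Y t i'))) \<longlongrightarrow> z0 l) F" for l
    unfolding z0_def
    by (intro tendsto_Max_range tendsto_add_ereal_general tendsto_const Y) (use A_T Y0 in auto)
  have z0: "z0 l \<noteq> \<infinity>" for l
  proof -
    have "z0 l \<in> range (\<lambda>i'. A i' l + Y0 i')" unfolding z0_def by (rule Max_range_in)
    then obtain i' where "z0 l = A i' l + Y0 i'" by blast
    then show ?thesis using A_T Y0[of i'] by (cases "A i' l"; cases "Y0 i'") auto
  qed
  have pz0: "ereal (P k l) * z0 l \<noteq> \<infinity>" for k l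
    using z0[of l] Pnn[of k l] by (cases "z0 l") auto
  have pzt: "((\<lambda>t. \<Sum>l\<in>UNIV. ereal (P k l) * Max (range (\<lambda>i'. A i' l + Y t i'))) \<longlongrightarrow>
      (\<Sum>l\<in>UNIV. ereal (P k l) * z0 l)) F" for k
    by (intro tendsto_sum_ereal_ninf tendsto_cmult_ereal_general zt) (auto simp: z0 Pnn linorder_not_le[symmetric])
  have pzs: "(\<Sum>l\<in>UNIV. ereal (P k l) * z0 l) \<noteq> \<infinity>" for k
    unfolding sum_Pinfty using pz0 by blast
  have trm: "((\<lambda>t. - B i k + (\<Sum>l\<in>UNIV. ereal (P k l) * Max (range (\<lambda>i'. A i' l + Y t i'))))
     \<longlongrightarrow> - B i k + (\<Sum>l\<in>UNIV. ereal (P k l) * z0 l)) F" for k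
  proof (cases "B i k = -\<infinity>")
    case True then show ?thesis by simp
  next
    case False
    then show ?thesis using B_T pzs[of k]
      by (intro tendsto_add_ereal_general tendsto_const pzt) (cases "B i k"; auto)
  qed
  show ?thesis unfolding Fs_expand z0_def[symmetric]
    by (rule tendsto_Min_range) (rule trm)
qed

end

context tset begin

definition yv :: "real^'m \<Rightarrow> 'm \<Rightarrow> real" where
  "yv v i = v$i - Max (range (\<lambda>j. v$j))"
definition gv :: "real \<Rightarrow> real^'m \<Rightarrow> 'm \<Rightarrow> real" where
  "gv c v i = max (fsR (yv v) i) c"
definition Phi :: "real \<Rightarrow> real^'m \<Rightarrow> real^'m" where
  "Phi c v = (\<chi> i. gv c v i - Max (range (gv c v)))"

lemma fsR_tendsto:
  assumes "\<And>i. ((\<lambda>t. y t i) \<longlongrightarrow> y0 i) F"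
  shows "((\<lambda>t. fsR (y t) i) \<longlongrightarrow> fsR y0 i) F"
proof -
  have "((\<lambda>t. opFstar A B P (\<lambda>i. ereal (y t i)) i) \<longlongrightarrow> opFstar A B P (\<lambda>i. ereal (y0 i)) i) F"
    by (rule Fs_tendsto) (auto intro: tendsto_ereal assms)
  then show ?thesis unfolding fsR lim_ereal .
qed

lemma Phi_tendsto:
  assumes f: "(f \<longlongrightarrow> v0) F"
  shows "((\<lambda>t. Phi c (f t)) \<longlongrightarrow> Phi c v0) F"
proof -
  have fi: "((\<lambda>t. f t $ i) \<longlongrightarrow> v0 $ i) F" for i by (rule tendsto_vec_nth[OF f])
  have yt: "((\<lambda>t. yv (f t) i) \<longlongrightarrow> yv v0 i) F" for i
    unfolding yv_def by (intro tendsto_diff fi tendsto_Max_range)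
  have gt: "((\<lambda>t. gv c (f t) i) \<longlongrightarrow> gv c v0 i) F" for i
    unfolding gv_def by (intro tendsto_max tendsto_const fsR_tendsto yt)
  show ?thesis unfolding Phi_def
    by (intro tendsto_vec_lambda tendsto_diff gt tendsto_Max_range)
qed

lemma Phi_cont: "continuous_on S (Phi c)"
  unfolding continuous_on_def by (auto intro: Phi_tendsto tendsto_ident_at)

lemma brouwer_step:
  assumes c: "c \<le> 0"
  shows "\<exists>y M. Max (range y) = 0 \<and> (\<forall>i. max (fsR y i) c = M + y i)
           \<and> M \<le> Max (range (\<lambda>j. max (fsR (\<lambda>_. 0) j) 0))"
proof -
  define H where "H = Max (range (\<lambda>j. max (fsR (\<lambda>_. 0) j) c))"
  define R where "R = H - c"
  have R0: "0 \<le> R" unfolding R_def H_def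
    using Max_range_ge[of "\<lambda>j. max (fsR (\<lambda>_. 0) j) c" undefined] by simp
  define K where "K = cbox (\<chi> i. - R) (0::real^'m)"
  have gle: "gv c v j \<le> H" for v j
  proof -
    have "yv v k \<le> 0" for k unfolding yv_def using Max_range_ge[of "\<lambda>j. v$j" k] by simp
    then have "fsR (yv v) j \<le> fsR (\<lambda>_. 0) j" by (intro fsR_mono) auto
    then have "gv c v j \<le> max (fsR (\<lambda>_. 0) j) c" unfolding gv_def by simp
    also have "\<dots> \<le> H" unfolding H_def by (rule Max_range_ge)
    finally show ?thesis .
  qed
  have maps: "Phi c \<in> K \<rightarrow> K"
  proof
    fix v assume "v \<in> K"
    have "Phi c v $ i \<le> 0" for i unfolding Phi_def using Max_range_ge[of "gv c v" i] by simp
    moreover have "- R \<le> Phi c v $ i" for i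
    proof -
      have a1: "c \<le> gv c v i" unfolding gv_def by simp
      have a2: "Max (range (gv c v)) \<le> H" unfolding Max_range_le_iff using gle by blast
      have "Phi c v $ i = gv c v i - Max (range (gv c v))" unfolding Phi_def by simp
      then show ?thesis unfolding R_def using a1 a2 by linarith
    qed
    ultimately show "Phi c v \<in> K" unfolding K_def mem_box_cart by simp
  qed
  have "0 \<in> K" unfolding K_def mem_box_cart using R0 by simp
  then have "K \<noteq> {}" by blast
  then obtain v where v: "v \<in> K" "Phi c v = v"
    using brouwer[of K "Phi c"] Phi_cont maps unfolding K_def by (auto simp: compact_cbox convex_box)
  define M where "M = Max (range (gv c v))"
  have vi: "v $ i = gv c v i - M" for i using v(2) unfolding Phi_def M_def
    by (metis vec_lambda_beta)
  have "Max (range (\<lambda>i. gv c v i - M)) = Max (range (gv c v)) - M"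
    by (subst mono_Max_commute[of "\<lambda>x. x - M"]) (auto simp: mono_def image_image)
  then have mx: "Max (range (\<lambda>i. v $ i)) = 0" unfolding vi M_def by simp
  define y where "y i = v $ i" for i
  have yy: "yv v = y" unfolding yv_def y_def mx by auto
  show ?thesis
  proof (intro exI conjI allI)
    show "Max (range y) = 0" using mx unfolding y_def by simp
    show "max (fsR y i) c = M + y i" for i using vi[of i] unfolding gv_def yy y_def by simp
    have "M \<le> H" unfolding M_def Max_range_le_iff using gle by blast
    also have "H \<le> Max (range (\<lambda>j. max (fsR (\<lambda>_. 0) j) 0))" unfolding H_def Max_range_le_iff
      using c by (meson Max_range_ge max.mono order.trans order_refl)
    finally show "M \<le> Max (range (\<lambda>j. max (fsR (\<lambda>_. 0) j) 0))" .
  qed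
qed

end


lemma compact_fun_UNIV: "compact (UNIV :: ('i::finite \<Rightarrow> ereal) set)"
proof -
  have "compact_space (product_topology (\<lambda>i::'i. (euclidean::ereal topology)) UNIV)"
    unfolding compact_space_product_topology
    by (simp add: compact_space_def compact_UNIV)
  then show ?thesis unfolding euclidean_product_topology compact_space_def by simp
qed

lemma seq_compact_pair_UNIV: "seq_compact (UNIV :: (('i::finite \<Rightarrow> ereal) \<times> ereal) set)"
proof -
  have "compact (UNIV \<times> UNIV :: (('i::finite \<Rightarrow> ereal) \<times> ereal) set)"
    by (intro compact_Times compact_fun_UNIV compact_UNIV)
  then show ?thesis by (intro compact_imp_seq_compact) simp
qed

lemma tendsto_coord:
  assumes "(f \<longlongrightarrow> g) F" shows "((\<lambda>t. f t i) \<longlongrightarrow> g i) F"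
  using continuous_on_tendsto_compose[OF continuous_on_product_coordinates[of i] assms] by simp

context tset begin

lemma eigen:
  "\<exists>Y mu. tvec Y \<and> Y \<noteq> tzero \<and> (\<forall>i. ereal mu + Y i \<le> opFstar A B P Y i)
     \<and> (\<forall>d>0. \<exists>x. \<forall>j. ereal (- mu - d + x j) < opF A B P (\<lambda>j. ereal (x j)) j)"
proof -
  obtain K where K: "\<And>x M. (\<forall>j. ereal (x j - M) \<le> opF A B P (\<lambda>j. ereal (x j)) j) \<Longrightarrow> -K \<le> M"
    using Fbound by blast
  define H where "H = Max (range (\<lambda>j. max (fsR (\<lambda>_. 0) j) 0))"
  have "\<forall>n. \<exists>y M. Max (range y) = 0 \<and> (\<forall>i. max (fsR y i) (- real n) = M + y i) \<and> M \<le> H"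
    unfolding H_def using brouwer_step by simp
  then obtain ys Ms where ys: "\<And>n. Max (range (ys n)) = 0"
    and fx: "\<And>n i. max (fsR (ys n) i) (- real n) = Ms n + ys n i" and MH: "\<And>n. Ms n \<le> H"
    by metis
  have yle: "ys n i \<le> 0" for n i using Max_range_ge[of "ys n" i] ys[of n] by simp
  have trs: "\<forall>j. ereal ((- zA (ys n) j) - Ms n) \<le> opF A B P (\<lambda>j. ereal (- zA (ys n) j)) j" for n
  proof (rule transform, rule allI)
    fix i
    have "fsR (ys n) i \<le> Ms n + ys n i" using fx[of n i] by linarith
    then show "opFstar A B P (\<lambda>i. ereal (ys n i)) i \<le> ereal (Ms n + ys n i)" by (simp add: fsR)
  qed
  have MK: "-K \<le> Ms n" for n by (rule K[OF trs])
  define X where "X n = ((\<lambda>i. ereal (ys n i)), ereal (Ms n))" for n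
  obtain l r where r: "strict_mono r" and lim: "(X \<circ> r) \<longlonglongrightarrow> l"
    using seq_compactE[OF seq_compact_pair_UNIV, of X] by blast
  define Y where "Y = fst l"
  have Ylim: "(\<lambda>n. ereal (ys (r n) i)) \<longlonglongrightarrow> Y i" for i
  proof -
    have "(\<lambda>n. fst ((X \<circ> r) n)) \<longlonglongrightarrow> Y" unfolding Y_def by (rule tendsto_fst[OF lim])
    from tendsto_coord[OF this, of i] show ?thesis by (simp add: X_def)
  qed
  have Mlim0: "(\<lambda>n. ereal (Ms (r n))) \<longlonglongrightarrow> snd l"
    using tendsto_snd[OF lim] by (simp add: X_def o_def)
  have "ereal (- K) \<le> snd l"
    by (rule tendsto_lowerbound[OF Mlim0]) (auto simp: MK)
  moreover have "snd l \<le> ereal H"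
    by (rule tendsto_upperbound[OF Mlim0]) (auto simp: MH)
  ultimately obtain mu where mu: "snd l = ereal mu" by (cases "snd l") auto
  have Mlim: "(\<lambda>n. Ms (r n)) \<longlonglongrightarrow> mu" using Mlim0 unfolding mu lim_ereal .
  have Yle: "Y i \<le> 0" for i
    by (rule tendsto_upperbound[OF Ylim]) (auto simp: yle)
  have tv: "tvec Y" unfolding tvec_def proof
    fix i show "Y i \<noteq> \<infinity>" using Yle[of i] by auto
  qed
  have "Y \<noteq> tzero"
  proof -
    have c0: "Max (range (\<lambda>i. ereal (ys (r n) i))) = 0" for n
    proof -
      have "ereal (Max (range (ys (r n)))) = Max (ereal ` range (ys (r n)))"
        by (rule mono_Max_commute) (auto simp: mono_def)
      then show ?thesis using ys[of "r n"] by (simp add: image_image zero_ereal_def)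
    qed
    have "(\<lambda>n. Max (range (\<lambda>i. ereal (ys (r n) i)))) \<longlonglongrightarrow> Max (range Y)"
      by (rule tendsto_Max_range) (rule Ylim)
    then have "Max (range Y) = 0" unfolding c0 using LIMSEQ_unique tendsto_const by blast
    moreover have "Max (range Y) \<in> range Y" by (rule Max_range_in)
    ultimately obtain i where "Y i = 0" by (metis rangeE)
    then show ?thesis by (auto simp: tzero_def fun_eq_iff intro!: exI[of _ i])
  qed
  have ineq: "ereal mu + Y i \<le> opFstar A B P Y i" for i
  proof (cases "Y i")
    case MInf then show ?thesis by simp
  next
    case PInf then show ?thesis using tv by (simp add: tvec_def)
  next
    case (real yi)
    have ylim: "(\<lambda>n. ys (r n) i) \<longlonglongrightarrow> yi" using Ylim[of i] unfolding real lim_ereal .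
    have slim: "(\<lambda>n. Ms (r n) + ys (r n) i) \<longlonglongrightarrow> mu + yi" by (intro tendsto_add Mlim ylim)
    have ev1: "eventually (\<lambda>n. mu + yi - 1 < Ms (r n) + ys (r n) i) sequentially"
      using order_tendstoD(1)[OF slim, of "mu + yi - 1"] by simp
    have ev2: "eventually (\<lambda>n. - real (r n) < mu + yi - 1) sequentially"
    proof (rule eventually_sequentiallyI[of "nat \<lceil>1 - (mu + yi - 1)\<rceil>"])
      fix n assume "nat \<lceil>1 - (mu + yi - 1)\<rceil> \<le> n"
      then have "1 - (mu + yi - 1) \<le> real n" by linarith
      moreover have "real n \<le> real (r n)" using seq_suble[OF r, of n] by simp
      ultimately show "- real (r n) < mu + yi - 1" by linarith
    qed
    have ev: "eventually (\<lambda>n. ereal (Ms (r n) + ys (r n) i) = opFstar A B P (\<lambda>i. ereal (ys (r n) i)) i) sequentially"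
      using ev1 ev2
    proof eventually_elim
      case (elim n)
      then have "fsR (ys (r n)) i = Ms (r n) + ys (r n) i" using fx[of "r n" i] by linarith
      then show ?case by (simp add: fsR)
    qed
    have l1: "(\<lambda>n. opFstar A B P (\<lambda>i. ereal (ys (r n) i)) i) \<longlonglongrightarrow> opFstar A B P Y i"
      by (rule Fs_tendsto) (use Ylim tv in \<open>auto simp: tvec_def\<close>)
    have "(\<lambda>n. ereal (Ms (r n) + ys (r n) i)) \<longlonglongrightarrow> ereal (mu + yi)" by (intro tendsto_ereal slim)
    then have l2: "(\<lambda>n. opFstar A B P (\<lambda>i. ereal (ys (r n) i)) i) \<longlonglongrightarrow> ereal (mu + yi)"
      by (rule Lim_transform_eventually[OF _ ev])
    have "opFstar A B P Y i = ereal (mu + yi)" using LIMSEQ_unique[OF l1 l2] .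
    then show ?thesis using real by simp
  qed
  have epart: "\<exists>x. \<forall>j. ereal (- mu - d + x j) < opF A B P (\<lambda>j. ereal (x j)) j" if d: "d > 0" for d
  proof -
    have "eventually (\<lambda>n. Ms (r n) < mu + d) sequentially"
      using order_tendstoD(2)[OF Mlim, of "mu + d"] d by simp
    then obtain n where n: "Ms (r n) < mu + d" using eventually_sequentially by auto
    show ?thesis
    proof (intro exI allI)
      fix j
      have "ereal (- mu - d + (- zA (ys (r n)) j)) < ereal ((- zA (ys (r n)) j) - Ms (r n))" using n by simp
      also have "\<dots> \<le> opF A B P (\<lambda>j. ereal (- zA (ys (r n)) j)) j" using trs[of "r n"] by blast
      finally show "ereal (- mu - d + (- zA (ys (r n)) j)) < opF A B P (\<lambda>j. ereal (- zA (ys (r n)) j)) j" .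
    qed
  qed
  show ?thesis using tv \<open>Y \<noteq> tzero\<close> ineq epart by blast
qed

end


lemma supnorm_ge: "\<bar>u i\<bar> \<le> supnorm u"
  unfolding supnorm_def by (rule Max_range_ge)
lemma supnorm_const: "supnorm (\<lambda>_::'d::finite. t) = \<bar>t\<bar>"
  unfolding supnorm_def by simp

lemma Inf_member_eq: "(x::ereal) \<in> S \<Longrightarrow> (\<And>s. s \<in> S \<Longrightarrow> x \<le> s) \<Longrightarrow> Inf S = x"
  by (meson Inf_greatest Inf_lower antisym)

lemma Inf_eps_eq:
  fixes x :: real
  assumes "\<And>s. s \<in> S \<Longrightarrow> ereal x \<le> s" "\<And>d. d > 0 \<Longrightarrow> ereal (x + d) \<in> S"
  shows "Inf S = ereal x"
proof (rule antisym)
  show "ereal x \<le> Inf S" using assms(1) by (rule Inf_greatest)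
  show "Inf S \<le> ereal x"
  proof (rule ereal_le_epsilon2)
    fix e :: real assume "0 < e"
    then have "Inf S \<le> ereal (x + e)" using assms(2) by (intro Inf_lower) 
    then show "Inf S \<le> ereal x + ereal e" by simp
  qed
qed

context tset begin

lemma final:
  "condPR (opF A B P) = condP (opFstar A B P)
         \<and> (feasP (opFstar A B P) \<or> feasPR (opF A B P))
         \<and> \<not> (feasPR (opF A B P) \<and> feasPR (opFstar A B P))"
proof -
  obtain Y mu where Y: "tvec Y" "Y \<noteq> tzero" and Ymu: "\<forall>i. ereal mu + Y i \<le> opFstar A B P Y i"
    and E: "\<And>d. d > 0 \<Longrightarrow> \<exists>x. \<forall>j. ereal (- mu - d + x j) < opF A B P (\<lambda>j. ereal (x j)) j"
    using eigen by blast
  define Fx where "Fx = opF A B P"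
  define Fs where "Fs = opFstar A B P"
  have F1: "lam < - mu" if "\<forall>j. ereal (lam + x j) < Fx (\<lambda>j. ereal (x j)) j" for lam x
    using weak[OF that[unfolded Fx_def] Y Ymu] by simp
  have F2: "\<exists>x. \<forall>j. ereal (lam + x j) < Fx (\<lambda>j. ereal (x j)) j" if "lam < - mu" for lam
    using E[of "- mu - lam"] that unfolding Fx_def by simp
  have F3: "mu' \<le> mu" if y: "tvec y" "y \<noteq> tzero" "\<forall>i. ereal mu' + y i \<le> Fs y i" for y mu'
  proof (rule ccontr)
    assume "\<not> mu' \<le> mu"
    then obtain x where "\<forall>j. ereal (- mu - (mu' - mu) / 2 + x j) < opF A B P (\<lambda>j. ereal (x j)) j"
      using E[of "(mu' - mu) / 2"] by auto
    from weak[OF this y(1,2) y(3)[unfolded Fs_def]] \<open>\<not> mu' \<le> mu\<close> show False by (simp add: field_simps)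
  qed
  have a1: "mu < supnorm u" if h: "feasPR (shiftmap u Fx)" for u
  proof -
    obtain x where x: "\<forall>i. ereal (x i) < ereal (u i) + Fx (\<lambda>j. ereal (x j)) i"
      using h unfolding feasPR_def shiftmap_def by blast
    have "ereal (- supnorm u + x j) < Fx (\<lambda>j. ereal (x j)) j" for j
    proof -
      have "ereal (x j) < ereal (u j) + Fx (\<lambda>j. ereal (x j)) j" using x by blast
      moreover have "u j \<le> supnorm u" using supnorm_ge[of u j] by linarith
      ultimately show ?thesis by (cases "Fx (\<lambda>j. ereal (x j)) j") auto
    qed
    then show ?thesis using F1 by fastforce
  qed
  have a2: "feasPR (shiftmap u Fx)" if h: "supnorm u < - mu" for u
  proof -
    obtain x where x: "\<forall>j. ereal (supnorm u + x j) < Fx (\<lambda>j. ereal (x j)) j" using F2 h by blast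
    have "ereal (x i) < ereal (u i) + Fx (\<lambda>j. ereal (x j)) i" for i
    proof -
      have "- u i \<le> supnorm u" using supnorm_ge[of u i] by linarith
      then show ?thesis using x[rule_format, of i] by (cases "Fx (\<lambda>j. ereal (x j)) i") auto
    qed
    then show ?thesis unfolding feasPR_def shiftmap_def by blast
  qed
  have a3: "feasPR (shiftmap (\<lambda>_. t) Fx) \<longleftrightarrow> mu < t" for t
  proof
    assume "feasPR (shiftmap (\<lambda>_. t) Fx)"
    then obtain x where x: "\<forall>i. ereal (x i) < ereal t + Fx (\<lambda>j. ereal (x j)) i"
      unfolding feasPR_def shiftmap_def by blast
    have "ereal (- t + x j) < Fx (\<lambda>j. ereal (x j)) j" for j
      using x[rule_format, of j] by (cases "Fx (\<lambda>j. ereal (x j)) j") auto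
    then show "mu < t" using F1 by fastforce
  next
    assume "mu < t"
    then obtain x where x: "\<forall>j. ereal (- t + x j) < Fx (\<lambda>j. ereal (x j)) j" using F2[of "- t"] by auto
    have "ereal (x i) < ereal t + Fx (\<lambda>j. ereal (x j)) i" for i
      using x[rule_format, of i] by (cases "Fx (\<lambda>j. ereal (x j)) i") auto
    then show "feasPR (shiftmap (\<lambda>_. t) Fx)" unfolding feasPR_def shiftmap_def by blast
  qed
  have a0: "feasPR Fx \<longleftrightarrow> mu < 0"
  proof -
    have "shiftmap (\<lambda>_. 0) Fx = Fx" unfolding shiftmap_def by (simp add: zero_ereal_def[symmetric])
    then show ?thesis using a3[of 0] by simp
  qed
  have b1g: "- mu \<le> c" if h: "feasP (shiftmap u Fs)" "\<And>i. u i \<le> c" for u c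
  proof -
    obtain y where y: "tvec y" "y \<noteq> tzero" "\<forall>i. y i \<le> ereal (u i) + Fs y i"
      using h(1) unfolding feasP_def shiftmap_def by blast
    have "ereal (- c) + y i \<le> Fs y i" for i
    proof -
      have "ereal (- c) + y i \<le> ereal (- c) + (ereal (u i) + Fs y i)"
        using y(3) by (intro add_left_mono) blast
      also have "\<dots> = ereal (- c + u i) + Fs y i" by (simp add: add.assoc[symmetric])
      also have "\<dots> \<le> 0 + Fs y i"
        using h(2)[of i] by (intro add_right_mono) (simp add: zero_ereal_def)
      finally show ?thesis by simp
    qed
    then show ?thesis using F3[OF y(1,2)] by fastforce
  qed
  have b2: "feasP (shiftmap u Fs)" if "\<And>i. - mu \<le> u i" for u
  proof -
    have "Y i \<le> ereal (u i) + Fs Y i" for i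
    proof -
      have "Y i = ereal (u i + mu - (u i + mu)) + Y i" by (simp add: zero_ereal_def[symmetric])
      also have "\<dots> \<le> ereal (u i) + (ereal mu + Y i)"
        using that[of i] Y(1) unfolding tvec_def by (cases "Y i") auto
      also have "\<dots> \<le> ereal (u i) + Fs Y i" using Ymu unfolding Fs_def by (intro add_left_mono) blast
      finally show ?thesis .
    qed
    then show ?thesis unfolding feasP_def shiftmap_def using Y by blast
  qed
  have b1: "- mu \<le> supnorm u" if "feasP (shiftmap u Fs)" for u
    using b1g[OF that, of "supnorm u"] supnorm_ge[of u] by (meson abs_ge_self order_trans)
  have b3: "feasP (shiftmap (\<lambda>_. t) Fs) \<longleftrightarrow> - mu \<le> t" for t
  proof
    assume "feasP (shiftmap (\<lambda>_. t) Fs)"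
    from b1g[OF this] show "- mu \<le> t" by simp
  next
    assume "- mu \<le> t" then show "feasP (shiftmap (\<lambda>_. t) Fs)" by (intro b2)
  qed
  have b0: "feasP Fs \<longleftrightarrow> 0 \<le> mu"
  proof -
    have "shiftmap (\<lambda>_. 0) Fs = Fs" unfolding shiftmap_def by (simp add: zero_ereal_def[symmetric])
    then show ?thesis using b3[of 0] by simp
  qed
  have cPR: "condPR Fx = inverse (ereal \<bar>mu\<bar>)"
  proof (cases "mu < 0")
    case True
    have "Inf {ereal (supnorm u) | u. \<not> feasPR (shiftmap u Fx)} = ereal (- mu)"
    proof (rule Inf_member_eq)
      show "ereal (- mu) \<in> {ereal (supnorm u) | u. \<not> feasPR (shiftmap u Fx)}"
        using a3[of mu] supnorm_const[where 'd='n and t=mu] True by (auto intro!: exI[of _ "\<lambda>_. mu"])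
      fix s assume "s \<in> {ereal (supnorm u) | u. \<not> feasPR (shiftmap u Fx)}"
      then obtain u where "s = ereal (supnorm u)" "\<not> feasPR (shiftmap u Fx)" by blast
      then show "ereal (- mu) \<le> s" using a2[of u] by force
    qed
    then show ?thesis using True a0 unfolding condPR_def cond_gen_def by simp
  next
    case False
    have "Inf {ereal (supnorm u) | u. feasPR (shiftmap u Fx)} = ereal mu"
    proof (rule Inf_eps_eq)
      fix s assume "s \<in> {ereal (supnorm u) | u. feasPR (shiftmap u Fx)}"
      then obtain u where "s = ereal (supnorm u)" "feasPR (shiftmap u Fx)" by blast
      then show "ereal mu \<le> s" using a1[of u] by force
    next
      fix d :: real assume "d > 0"
      then show "ereal (mu + d) \<in> {ereal (supnorm u) | u. feasPR (shiftmap u Fx)}"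
        using a3[of "mu + d"] supnorm_const[where 'd='n and t="mu + d"] False by (auto intro!: exI[of _ "\<lambda>_. mu + d"])
    qed
    then show ?thesis using False a0 unfolding condPR_def cond_gen_def by simp
  qed
  have cP: "condP Fs = inverse (ereal \<bar>mu\<bar>)"
  proof (cases "mu < 0")
    case True
    have "Inf {ereal (supnorm u) | u. feasP (shiftmap u Fs)} = ereal (- mu)"
    proof (rule Inf_member_eq)
      show "ereal (- mu) \<in> {ereal (supnorm u) | u. feasP (shiftmap u Fs)}"
        using b3[of "- mu"] supnorm_const[where 'd='m and t="- mu"] True by (auto intro!: exI[of _ "\<lambda>_. - mu"])
      fix s assume "s \<in> {ereal (supnorm u) | u. feasP (shiftmap u Fs)}"
      then obtain u where "s = ereal (supnorm u)" "feasP (shiftmap u Fs)" by blast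
      then show "ereal (- mu) \<le> s" using b1[of u] by force
    qed
    then show ?thesis using True b0 unfolding condP_def cond_gen_def by simp
  next
    case False
    have "Inf {ereal (supnorm u) | u. \<not> feasP (shiftmap u Fs)} = ereal mu"
    proof (rule Inf_eps_eq)
      fix s assume "s \<in> {ereal (supnorm u) | u. \<not> feasP (shiftmap u Fs)}"
      then obtain u where u: "s = ereal (supnorm u)" "\<not> feasP (shiftmap u Fs)" by blast
      have "\<not> (\<forall>i. - mu \<le> u i)" using u(2) b2[of u] by blast
      then obtain i where "u i < - mu" by (meson not_le)
      then have "mu \<le> supnorm u" using supnorm_ge[of u i] by linarith
      then show "ereal mu \<le> s" using u by simp
    next
      fix d :: real assume "d > 0"
      then show "ereal (mu + d) \<in> {ereal (supnorm u) | u. \<not> feasP (shiftmap u Fs)}"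
        using b3[of "- (mu + d)"] supnorm_const[where 'd='m and t="- (mu + d)"] False
        by (auto intro!: exI[of _ "\<lambda>_. - (mu + d)"])
    qed
    then show ?thesis using False b0 unfolding condP_def cond_gen_def by simp
  qed
  have iii: "\<not> (feasPR Fx \<and> feasPR Fs)"
  proof
    assume h: "feasPR Fx \<and> feasPR Fs"
    then obtain y where y: "\<forall>i. ereal (y i) < Fs (\<lambda>j. ereal (y j)) i" unfolding feasPR_def by blast
    have "0 \<le> mu"
    proof (rule F3)
      show "tvec (\<lambda>j. ereal (y j))" by (simp add: tvec_def)
      show "(\<lambda>j. ereal (y j)) \<noteq> tzero" by (auto simp: tzero_def fun_eq_iff)
      show "\<forall>i. ereal 0 + ereal (y i) \<le> Fs (\<lambda>j. ereal (y j)) i" using y by (simp add: less_imp_le)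
    qed
    then show False using h a0 by simp
  qed
  show ?thesis using cPR cP iii a0 b0 unfolding Fx_def Fs_def by auto
qed
end


theorem mainTheorem3:
  fixes A :: "'m::finite \<Rightarrow> 'n::finite \<Rightarrow> ereal"
    and B :: "'m \<Rightarrow> 'q::finite \<Rightarrow> ereal"
    and P :: "'q \<Rightarrow> 'n \<Rightarrow> real"
  assumes A_T: "\<forall>i j. A i j \<noteq> \<infinity>"
    and B_T: "\<forall>i k. B i k \<noteq> \<infinity>"
    and P_stoch: "row_stochastic P"
    and B_rows: "\<forall>i. \<exists>k. B i k \<noteq> -\<infinity>"
    and A_cols: "\<forall>j. \<exists>i. A i j \<noteq> -\<infinity>"
    and A_rows: "\<forall>i. \<exists>j. A i j \<noteq> -\<infinity>"
  shows "condPR (opF A B P) = condP (opFstar A B P)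
         \<and> (feasP (opFstar A B P) \<or> feasPR (opF A B P))
         \<and> \<not> (feasPR (opF A B P) \<and> feasPR (opFstar A B P))"
proof -
  have "tset A B P" using assms by (intro tset.intro) auto
  then interpret tset A B P .
  show ?thesis by (rule final)
qed

end
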